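(* Consider a firm selling a single product in bundle sizes $i\in N=\{1,\dots,n\}$ to customer types $j\in M$. Suppose that for every $j\in M$, $d_{ij}(p)$ is (weakly) increasing in $p_k$ for all $k\ne i$, and $\sum_{i\in N}i\,d_{ij}(p)$ is (weakly) decreasing in each component of $p$. Let $f\in\mathbb{R}^n$ with $f_i=i$. Then $$\bar{\mathcal{R}}\le\beta\,\mathcal{R}^f\le\beta\,\mathcal{R}^*,\qquad \beta=1+\ln(q_{\max}/q_{\min}),$$ where $\mathcal{R}^*$ is the profit from the optimal non-personalized non-linear pricing policy and $\mathcal{R}^f$ is the optimal profit under the non-personalized linear pricing policy $p_i=iq$.
   Context: $p_i$ is the price of a size-$i$ bundle, $p=(p_1,\dots,p_n)$, and $d_{ij}(p)\ge0$ is the demand for size-$i$ bundles from customer type $j\in M=\{1,\dots,m\}$; type weights $\theta_j>0$, $\sum_j\theta_j=1$. $R_j(p)=\sum_ip_id_{ij}(p)$, $\mathcal{R}^*_j=\max_{p\ge0}R_j(p)$, $\bar{\mathcal{R}}=\sum_j\theta_j\mathcal{R}^*_j$ (optimal personalized non-linear pricing profit), $R(p)=\sum_j\theta_jR_j(p)$, $\mathcal{R}^*=\max_{p\ge0}R(p)$, $\mathcal{R}^f=\max_{q>0}R(qf)$. Standing assumption (A0): for each $j$, $R_j$ attains its maximum over $p\ge 0$ at a price vector $\bar p^j$ with positive finite components $\bar p_{ij}$. $q_{\min}=\min_{i,j}\bar p_{ij}/f_i=\min_{i,j}\bar p_{ij}/i$ and $q_{\max}=\max_{i,j}\bar p_{ij}/i$.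 *)

theory Defs
  imports Complex_Main
begin

text \<open>Demand d i j p is the demand for
  size-i bundles from customer type j at price vector p.\<close>

definition price_vecs :: "nat \<Rightarrow> (nat \<Rightarrow> real) set" where
  "price_vecs n = {p. (\<forall>i\<in>{1..n}. 0 \<le> p i) \<and> (\<forall>i. i \<notin> {1..n} \<longrightarrow> p i = 0)}"

definition rev_type :: "nat \<Rightarrow> (nat \<Rightarrow> nat \<Rightarrow> (nat \<Rightarrow> real) \<Rightarrow> real) \<Rightarrow> nat \<Rightarrow> (nat \<Rightarrow> real) \<Rightarrow> real" where
  "rev_type n d j p = (\<Sum>i=1..n. p i * d i j p)"

definition rev_total :: "nat \<Rightarrow> nat \<Rightarrow> (nat \<Rightarrow> nat \<Rightarrow> (nat \<Rightarrow> real) \<Rightarrow> real) \<Rightarrow> (nat \<Rightarrow> real) \<Rightarrow> (nat \<Rightarrow> real) \<Rightarrow> real" where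
  "rev_total n m d \<theta> p = (\<Sum>j=1..m. \<theta> j * rev_type n d j p)"

definition lin_price :: "nat \<Rightarrow> real \<Rightarrow> nat \<Rightarrow> real" where
  "lin_price n q = (\<lambda>i. if i \<in> {1..n} then q * real i else 0)"

definition R_star :: "nat \<Rightarrow> nat \<Rightarrow> (nat \<Rightarrow> nat \<Rightarrow> (nat \<Rightarrow> real) \<Rightarrow> real) \<Rightarrow> (nat \<Rightarrow> real) \<Rightarrow> real" where
  "R_star n m d \<theta> = (SUP p\<in>price_vecs n. rev_total n m d \<theta> p)"

definition R_f :: "nat \<Rightarrow> nat \<Rightarrow> (nat \<Rightarrow> nat \<Rightarrow> (nat \<Rightarrow> real) \<Rightarrow> real) \<Rightarrow> (nat \<Rightarrow> real) \<Rightarrow> real" where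
  "R_f n m d \<theta> = (SUP q\<in>{0<..}. rev_total n m d \<theta> (lin_price n q))"

end

theory Submission
  imports Defs
begin

lemma raise_set:
  fixes d :: "nat \<Rightarrow> nat \<Rightarrow> (nat \<Rightarrow> real) \<Rightarrow> real"
  assumes incr: "\<forall>i\<in>{1..n}. \<forall>k\<in>{1..n}. \<forall>p\<in>price_vecs n. \<forall>x.
           k \<noteq> i \<longrightarrow> p k \<le> x \<longrightarrow> d i j p \<le> d i j (p(k := x))"
    and decr: "\<forall>k\<in>{1..n}. \<forall>p\<in>price_vecs n. \<forall>x.
           p k \<le> x \<longrightarrow> (\<Sum>i=1..n. real i * d i j (p(k := x))) \<le> (\<Sum>i=1..n. real i * d i j p)"
    and K: "finite K" "K \<subseteq> {1..n}" and p: "p \<in> price_vecs n" and x: "\<forall>k\<in>K. p k \<le> x k"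
  shows "(\<lambda>i. if i \<in> K then x i else p i) \<in> price_vecs n \<and>
    (\<forall>i\<in>{1..n}-K. d i j p \<le> d i j (\<lambda>i. if i \<in> K then x i else p i)) \<and>
    (\<Sum>i=1..n. real i * d i j (\<lambda>i. if i \<in> K then x i else p i)) \<le> (\<Sum>i=1..n. real i * d i j p)"
  using K x
proof (induction K rule: finite_induct)
  case empty
  then show ?case using p by simp
next
  case (insert k K)
  define pK where "pK = (\<lambda>i. if i \<in> K then x i else p i)"
  have IH: "pK \<in> price_vecs n" "\<forall>i\<in>{1..n}-K. d i j p \<le> d i j pK"
    "(\<Sum>i=1..n. real i * d i j pK) \<le> (\<Sum>i=1..n. real i * d i j p)"
    using insert unfolding pK_def by auto
  have new: "(\<lambda>i. if i \<in> insert k K then x i else p i) = pK(k := x k)"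
    by (auto simp: pK_def)
  have k: "k \<in> {1..n}" "pK k \<le> x k" using insert by (auto simp: pK_def)
  have "0 \<le> pK k" using IH(1) k(1) unfolding price_vecs_def by auto
  then have "0 \<le> x k" using k(2) by linarith
  then have vec: "pK(k := x k) \<in> price_vecs n"
    using IH(1) k unfolding price_vecs_def by auto
  have "\<forall>i\<in>{1..n}-insert k K. d i j p \<le> d i j (pK(k := x k))"
  proof
    fix i assume i: "i \<in> {1..n}-insert k K"
    have "d i j p \<le> d i j pK" using IH(2) i by auto
    also have "\<dots> \<le> d i j (pK(k := x k))" using incr i k IH(1) by auto
    finally show "d i j p \<le> d i j (pK(k := x k))" .
  qed
  moreover have "(\<Sum>i=1..n. real i * d i j (pK(k := x k))) \<le> (\<Sum>i=1..n. real i * d i j p)"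
    using decr k IH(1) IH(3) by fastforce
  ultimately show ?case using vec unfolding new by blast
qed

lemma key:
  fixes d :: "nat \<Rightarrow> nat \<Rightarrow> (nat \<Rightarrow> real) \<Rightarrow> real"
  assumes incr: "\<forall>i\<in>{1..n}. \<forall>k\<in>{1..n}. \<forall>p\<in>price_vecs n. \<forall>x.
           k \<noteq> i \<longrightarrow> p k \<le> x \<longrightarrow> d i j p \<le> d i j (p(k := x))"
    and decr: "\<forall>k\<in>{1..n}. \<forall>p\<in>price_vecs n. \<forall>x.
           p k \<le> x \<longrightarrow> (\<Sum>i=1..n. real i * d i j (p(k := x))) \<le> (\<Sum>i=1..n. real i * d i j p)"
    and dnn: "\<forall>i\<in>{1..n}. \<forall>p\<in>price_vecs n. 0 \<le> d i j p"
    and pb: "pb \<in> price_vecs n" and t: "0 \<le> t"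
  shows "(\<Sum>i=1..n. if t * real i \<le> pb i then real i * d i j pb else 0)
     \<le> (\<Sum>i=1..n. real i * d i j (lin_price n t))"
proof -
  define S where "S = {i\<in>{1..n}. t * real i \<le> pb i}"
  define p' where "p' = (\<lambda>i. if i \<in> S then t * real i else pb i)"
  have S: "S \<subseteq> {1..n}" "finite S" by (auto simp: S_def)
  have p'vec: "p' \<in> price_vecs n" using pb t unfolding price_vecs_def p'_def S_def by auto
  have pbeq: "(\<lambda>i. if i \<in> S then pb i else p' i) = pb" by (auto simp: p'_def)
  have A: "(\<forall>i\<in>{1..n}-S. d i j p' \<le> d i j pb) \<and>
    (\<Sum>i=1..n. real i * d i j pb) \<le> (\<Sum>i=1..n. real i * d i j p')"
    using raise_set[where n=n and j=j and d=d and K=S and p=p' and x=pb, OF incr decr S(2) S(1) p'vec] unfolding pbeq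
    by (auto simp: p'_def S_def)
  have lin_eq: "(\<lambda>i. if i \<in> {1..n}-S then t * real i else p' i) = lin_price n t"
    using pb by (auto simp: lin_price_def p'_def price_vecs_def S_def)
  have linvec: "lin_price n t \<in> price_vecs n" using t by (auto simp: lin_price_def price_vecs_def)
  have hyp: "\<forall>k\<in>{1..n}-S. p' k \<le> t * real k" by (auto simp: p'_def S_def)
  note B0 = raise_set[where n=n and j=j and d=d and K="{1..n}-S" and p=p' and x="\<lambda>i. t * real i", OF incr decr _ _ p'vec hyp]
  have B: "\<forall>i\<in>{1..n}-({1..n}-S). d i j p' \<le> d i j (lin_price n t)"
    using B0 unfolding lin_eq by auto
  have lhs: "(\<Sum>i=1..n. if t * real i \<le> pb i then real i * d i j pb else 0) = (\<Sum>i\<in>S. real i * d i j pb)"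
    unfolding S_def by (rule sum.inter_filter[symmetric]) simp
  have split: "\<And>g. (\<Sum>i=1..n. g i) = (\<Sum>i\<in>{1..n}-S. g i) + (\<Sum>i\<in>S. g i)"
    using sum.subset_diff[OF S(1)] by auto
  have "(\<Sum>i\<in>S. real i * d i j pb) \<le> (\<Sum>i\<in>S. real i * d i j p')"
  proof -
    have "(\<Sum>i\<in>{1..n}-S. real i * d i j p') \<le> (\<Sum>i\<in>{1..n}-S. real i * d i j pb)"
      using A by (intro sum_mono mult_left_mono) auto
    then show ?thesis using A split[of "\<lambda>i. real i * d i j pb"] split[of "\<lambda>i. real i * d i j p'"]
      by linarith
  qed
  also have "\<dots> \<le> (\<Sum>i\<in>S. real i * d i j (lin_price n t))"
    using B S(1) by (intro sum_mono mult_left_mono) auto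
  also have "\<dots> \<le> (\<Sum>i=1..n. real i * d i j (lin_price n t))"
    using S dnn linvec by (intro sum_mono2) auto
  finally show ?thesis unfolding lhs .
qed

theorem corollary4:
  fixes n m :: nat
    and d :: "nat \<Rightarrow> nat \<Rightarrow> (nat \<Rightarrow> real) \<Rightarrow> real"
    and \<theta> :: "nat \<Rightarrow> real"
    and pbar :: "nat \<Rightarrow> nat \<Rightarrow> real"
  assumes n_pos: "1 \<le> n" and m_pos: "1 \<le> m"
    and theta_pos: "\<forall>j\<in>{1..m}. 0 < \<theta> j"
    and theta_sum: "(\<Sum>j=1..m. \<theta> j) = 1"
    and d_nonneg: "\<forall>i\<in>{1..n}. \<forall>j\<in>{1..m}. \<forall>p\<in>price_vecs n. 0 \<le> d i j p"
    and d_incr_other: "\<forall>j\<in>{1..m}. \<forall>i\<in>{1..n}. \<forall>k\<in>{1..n}. \<forall>p\<in>price_vecs n. \<forall>x.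
           k \<noteq> i \<longrightarrow> p k \<le> x \<longrightarrow> d i j p \<le> d i j (p(k := x))"
    and total_decr: "\<forall>j\<in>{1..m}. \<forall>k\<in>{1..n}. \<forall>p\<in>price_vecs n. \<forall>x.
           p k \<le> x \<longrightarrow> (\<Sum>i=1..n. real i * d i j (p(k := x))) \<le> (\<Sum>i=1..n. real i * d i j p)"
    and pbar_vec: "\<forall>j\<in>{1..m}. pbar j \<in> price_vecs n"
    and pbar_pos: "\<forall>j\<in>{1..m}. \<forall>i\<in>{1..n}. 0 < pbar j i"
    and pbar_opt: "\<forall>j\<in>{1..m}. \<forall>p\<in>price_vecs n. rev_type n d j p \<le> rev_type n d j (pbar j)"
  defines "\<beta> \<equiv> 1 + ln (Max {pbar j i / real i | i j. i \<in> {1..n} \<and> j \<in> {1..m}}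
                        / Min {pbar j i / real i | i j. i \<in> {1..n} \<and> j \<in> {1..m}})"
    and "qmin \<equiv> Min {pbar j i / real i | i j. i \<in> {1..n} \<and> j \<in> {1..m}}"
    and "qmax \<equiv> Max {pbar j i / real i | i j. i \<in> {1..n} \<and> j \<in> {1..m}}"
    and "Rbar \<equiv> (\<Sum>j=1..m. \<theta> j * rev_type n d j (pbar j))"
  shows "Rbar \<le> \<beta> * R_f n m d \<theta> \<and> \<beta> * R_f n m d \<theta> \<le> \<beta> * R_star n m d \<theta>"
proof -
  define Q where "Q = {pbar j i / real i | i j. i \<in> {1..n} \<and> j \<in> {1..m}}"
  have Qim: "Q = (\<lambda>(i,j). pbar j i / real i) ` ({1..n} \<times> {1..m})"
    unfolding Q_def by fastforce
  have finQ: "finite Q" unfolding Qim by auto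
  have Qne: "Q \<noteq> {}" unfolding Qim using n_pos m_pos by auto
  have Qpos: "\<forall>q\<in>Q. 0 < q" unfolding Q_def using pbar_pos by auto
  have qin: "pbar j i / real i \<in> Q" if "i \<in> {1..n}" "j \<in> {1..m}" for i j
    unfolding Q_def using that by blast
  define L where "L = sorted_list_of_set Q"
  define r where "r = length L"
  have setL: "set L = Q" unfolding L_def using finQ by simp
  have sortL: "sorted_wrt (<) L" unfolding L_def by (simp add: strict_sorted_iff)
  have r1: "1 \<le> r" unfolding r_def using setL Qne by (cases L) auto
  define tt where "tt k = (if k = 0 then 0 else L ! (k - 1))" for k
  have ttQ: "tt k \<in> Q" if "k \<in> {1..r}" for k
    using that setL unfolding tt_def r_def by auto
  have ttpos: "0 < tt k" if "k \<in> {1..r}" for k using ttQ[OF that] Qpos by auto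
  have ttmono: "tt k < tt k'" if "k < k'" "k' \<le> r" for k k'
  proof (cases "k = 0")
    case True then show ?thesis using ttpos[of k'] that tt_def by auto
  next
    case False then show ?thesis
      using sorted_wrt_nth_less[OF sortL, of "k - 1" "k' - 1"] that unfolding tt_def r_def by auto
  qed
  have ttle_iff: "tt k \<le> tt K \<longleftrightarrow> k \<le> K" if "k \<le> r" "K \<le> r" for k K
    using ttmono[of k K] ttmono[of K k] that by (cases "k \<le> K"; cases "k = K") auto
  have ttsurj: "\<exists>K\<in>{1..r}. tt K = q" if "q \<in> Q" for q
  proof -
    have "q \<in> set L" using that setL by simp
    then obtain k where "k < r" "L ! k = q" unfolding r_def by (auto simp: in_set_conv_nth)
    then show ?thesis by (intro bexI[of _ "Suc k"]) (auto simp: tt_def)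
  qed
  have telesc: "(\<Sum>k=1..K. tt k - tt (k - 1)) = tt K" for K
    by (induction K) (auto simp: tt_def)
  have tele: "(\<Sum>k=1..r. if tt k \<le> q then tt k - tt (k - 1) else 0) = q" if qQ: "q \<in> Q" for q
  proof -
    obtain K where K: "K \<in> {1..r}" "tt K = q" using ttsurj[OF qQ] by blast
    have "(\<Sum>k=1..r. if tt k \<le> q then tt k - tt (k - 1) else 0)
        = (\<Sum>k=1..r. if k \<le> K then tt k - tt (k - 1) else 0)"
      using K ttle_iff by (intro sum.cong) auto
    also have "\<dots> = (\<Sum>k\<in>{k\<in>{1..r}. k \<le> K}. tt k - tt (k - 1))"
      by (rule sum.inter_filter[symmetric]) simp
    also have "{k\<in>{1..r}. k \<le> K} = {1..K}" using K by auto
    finally show ?thesis using telesc K by simp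
  qed
  define D where "D j t = (\<Sum>i=1..n. real i * d i j (lin_price n t))" for j t
  define Rf where "Rf = R_f n m d \<theta>"
  have linvec: "lin_price n t \<in> price_vecs n" if "0 \<le> t" for t
    using that by (auto simp: lin_price_def price_vecs_def)
  have revlin: "rev_total n m d \<theta> (lin_price n t) = t * (\<Sum>j=1..m. \<theta> j * D j t)" for t
    unfolding rev_total_def rev_type_def D_def sum_distrib_left
    by (intro sum.cong refl) (auto simp: lin_price_def sum_distrib_left mult_ac)
  have revle: "rev_total n m d \<theta> p \<le> Rbar" if "p \<in> price_vecs n" for p
    unfolding rev_total_def Rbar_def using pbar_opt theta_pos that
    by (intro sum_mono mult_left_mono) (auto simp: less_imp_le)
  have bdd: "bdd_above ((\<lambda>q. rev_total n m d \<theta> (lin_price n q)) ` {0<..})"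
    using revle linvec by (intro bdd_aboveI[of _ Rbar]) auto
  have RfUp: "rev_total n m d \<theta> (lin_price n t) \<le> Rf" if "0 < t" for t
    unfolding Rf_def R_f_def using that bdd by (intro cSUP_upper) auto
  have Dnn: "0 \<le> D j t" if "j \<in> {1..m}" "0 \<le> t" for j t
    unfolding D_def using d_nonneg linvec[OF that(2)] that by (intro sum_nonneg mult_nonneg_nonneg) auto
  have pertype: "rev_type n d j (pbar j) \<le> (\<Sum>k=1..r. (tt k - tt (k - 1)) * D j (tt k))"
    if j: "j \<in> {1..m}" for j
  proof -
    have incr: "\<forall>i\<in>{1..n}. \<forall>k\<in>{1..n}. \<forall>p\<in>price_vecs n. \<forall>x.
           k \<noteq> i \<longrightarrow> p k \<le> x \<longrightarrow> d i j p \<le> d i j (p(k := x))"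
      using d_incr_other j by blast
    have decr: "\<forall>k\<in>{1..n}. \<forall>p\<in>price_vecs n. \<forall>x.
           p k \<le> x \<longrightarrow> (\<Sum>i=1..n. real i * d i j (p(k := x))) \<le> (\<Sum>i=1..n. real i * d i j p)"
      using total_decr j by blast
    have dnn: "\<forall>i\<in>{1..n}. \<forall>p\<in>price_vecs n. 0 \<le> d i j p" using d_nonneg j by blast
    have "rev_type n d j (pbar j) = (\<Sum>i=1..n. (real i * d i j (pbar j)) * (pbar j i / real i))"
      unfolding rev_type_def by (intro sum.cong refl) auto
    also have "\<dots> = (\<Sum>i=1..n. \<Sum>k=1..r. (tt k - tt (k - 1)) *
        (if tt k * real i \<le> pbar j i then real i * d i j (pbar j) else 0))"
    proof (intro sum.cong refl)
      fix i assume i: "i \<in> {1..n}"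
      have iff: "tt k * real i \<le> pbar j i \<longleftrightarrow> tt k \<le> pbar j i / real i" for k
        using i by (simp add: pos_le_divide_eq)
      show "real i * d i j (pbar j) * (pbar j i / real i) = (\<Sum>k=1..r. (tt k - tt (k - 1)) *
        (if tt k * real i \<le> pbar j i then real i * d i j (pbar j) else 0))"
        unfolding iff
      proof -
        let ?c = "real i * d i j (pbar j)"
        have "(\<Sum>k=1..r. (tt k - tt (k - 1)) * (if tt k \<le> pbar j i / real i then ?c else 0))
          = ?c * (\<Sum>k=1..r. if tt k \<le> pbar j i / real i then tt k - tt (k - 1) else 0)"
          by (subst sum_distrib_left) (intro sum.cong refl, simp)
        also have "\<dots> = ?c * (pbar j i / real i)" using tele[OF qin[OF i j]] by simp
        finally show "?c * (pbar j i / real i) = (\<Sum>k=1..r. (tt k - tt (k - 1)) * (if tt k \<le> pbar j i / real i then ?c else 0))" by simp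
      qed
    qed
    also have "\<dots> = (\<Sum>k=1..r. (tt k - tt (k - 1)) *
        (\<Sum>i=1..n. if tt k * real i \<le> pbar j i then real i * d i j (pbar j) else 0))"
      by (subst sum.swap) (simp add: sum_distrib_left)
    also have "\<dots> \<le> (\<Sum>k=1..r. (tt k - tt (k - 1)) * D j (tt k))"
    proof (intro sum_mono mult_left_mono)
      fix k assume k: "k \<in> {1..r}"
      show "0 \<le> tt k - tt (k - 1)" using ttmono[of "k - 1" k] k by auto
      show "(\<Sum>i=1..n. if tt k * real i \<le> pbar j i then real i * d i j (pbar j) else 0) \<le> D j (tt k)"
        unfolding D_def using key[where n=n and j=j and d=d and pb="pbar j" and t="tt k", OF incr decr dnn] pbar_vec j ttpos[OF k] by auto
    qed
    finally show ?thesis .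
  qed
  have Rf0: "0 \<le> Rf"
    using RfUp[of 1] revlin[of 1] Dnn theta_pos
    by (smt (verit) atLeastAtMost_iff mult_nonneg_nonneg sum_nonneg)
  have "Rbar \<le> (\<Sum>j=1..m. \<theta> j * (\<Sum>k=1..r. (tt k - tt (k - 1)) * D j (tt k)))"
    unfolding Rbar_def using pertype theta_pos by (intro sum_mono mult_left_mono) (auto simp: less_imp_le)
  also have "\<dots> = (\<Sum>k=1..r. ((tt k - tt (k - 1)) / tt k) * rev_total n m d \<theta> (lin_price n (tt k)))"
  proof -
    have "(\<Sum>j=1..m. \<theta> j * (\<Sum>k=1..r. (tt k - tt (k - 1)) * D j (tt k)))
        = (\<Sum>k=1..r. (tt k - tt (k - 1)) * (\<Sum>j=1..m. \<theta> j * D j (tt k)))"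
      by (simp add: sum_distrib_left mult_ac) (rule sum.swap)
    also have "\<dots> = (\<Sum>k=1..r. ((tt k - tt (k - 1)) / tt k) * rev_total n m d \<theta> (lin_price n (tt k)))"
      unfolding revlin
    proof (intro sum.cong refl)
      fix k assume k: "k \<in> {1..r}"
      then have "tt k \<noteq> 0" using ttpos by force
      then show "(tt k - tt (k - 1)) * (\<Sum>j=1..m. \<theta> j * D j (tt k)) = (tt k - tt (k - 1)) / tt k * (tt k * (\<Sum>j=1..m. \<theta> j * D j (tt k)))"
        by simp
    qed
    finally show ?thesis .
  qed
  also have "\<dots> \<le> (\<Sum>k=1..r. ((tt k - tt (k - 1)) / tt k) * Rf)"
  proof (intro sum_mono mult_left_mono)
    fix k assume k: "k \<in> {1..r}"
    show "rev_total n m d \<theta> (lin_price n (tt k)) \<le> Rf" using RfUp ttpos[OF k] by auto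
    show "0 \<le> (tt k - tt (k - 1)) / tt k" using ttmono[of "k - 1" k] ttpos[OF k] k by auto
  qed
  also have "\<dots> = Rf * (\<Sum>k=1..r. 1 - tt (k - 1) / tt k)"
    unfolding sum_distrib_left
  proof (intro sum.cong refl)
    fix k assume k: "k \<in> {1..r}"
    then have "tt k \<noteq> 0" using ttpos by force
    then show "(tt k - tt (k - 1)) / tt k * Rf = Rf * (1 - tt (k - 1) / tt k)"
      by (simp add: field_simps)
  qed
  also have "\<dots> \<le> Rf * (1 + ln (tt r) - ln (tt 1))"
  proof (intro mult_left_mono Rf0)
    have "(\<Sum>k=1..K. 1 - tt (k - 1) / tt k) \<le> 1 + ln (tt K) - ln (tt 1)" if "1 \<le> K" "K \<le> r" for K
      using that
    proof (induction K rule: dec_induct)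
      case base then show ?case using ttpos[of 1] r1 by (simp add: tt_def)
    next
      case (step K)
      have p1: "0 < tt K" "0 < tt (Suc K)" using ttpos step by auto
      have "ln (tt K / tt (Suc K)) \<le> tt K / tt (Suc K) - 1"
        using p1 by (intro ln_le_minus_one) auto
      then have "1 - tt K / tt (Suc K) \<le> ln (tt (Suc K)) - ln (tt K)"
        using p1 by (simp add: ln_div)
      then show ?case using step by simp
    qed
    then show "(\<Sum>k=1..r. 1 - tt (k - 1) / tt k) \<le> 1 + ln (tt r) - ln (tt 1)" using r1 by auto
  qed
  also have "1 + ln (tt r) - ln (tt 1) = \<beta>"
  proof -
    have mn: "tt 1 = Min Q"
    proof (rule antisym)
      obtain K where K: "K \<in> {1..r}" "tt K = Min Q" using ttsurj Min_in[OF finQ Qne] by blast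
      show "tt 1 \<le> Min Q" using K ttle_iff[of 1 K] by auto
      show "Min Q \<le> tt 1" using ttQ[of 1] r1 finQ by auto
    qed
    have mx: "tt r = Max Q"
    proof (rule antisym)
      obtain K where K: "K \<in> {1..r}" "tt K = Max Q" using ttsurj Max_in[OF finQ Qne] by blast
      show "Max Q \<le> tt r" using K ttle_iff[of K r] by auto
      show "tt r \<le> Max Q" using ttQ[of r] r1 finQ by auto
    qed
    show ?thesis unfolding \<beta>_def Q_def[symmetric] mn[symmetric] mx[symmetric]
      using ttpos[of 1] ttpos[of r] r1 by (simp add: ln_div)
  qed
  finally have first: "Rbar \<le> \<beta> * Rf" by (simp add: mult.commute)
  have bge: "0 \<le> \<beta>"
  proof -
    have "Min Q \<le> Max Q" using finQ Qne by simp
    moreover have "0 < Min Q" using Qpos Min_in[OF finQ Qne] by auto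
    ultimately have "0 \<le> ln (Max Q / Min Q)" by simp
    then show ?thesis unfolding \<beta>_def Q_def by simp
  qed
  have "Rf \<le> R_star n m d \<theta>"
    unfolding Rf_def R_f_def R_star_def
  proof (rule cSUP_mono)
    show "{0<..} \<noteq> ({}::real set)" by auto
    show "bdd_above ((\<lambda>p. rev_total n m d \<theta> p) ` price_vecs n)"
      using revle by (intro bdd_aboveI[of _ Rbar]) auto
    show "\<exists>pp\<in>price_vecs n. rev_total n m d \<theta> (lin_price n q) \<le> rev_total n m d \<theta> pp" if "q \<in> {0<..}" for q
      using linvec that by force
  qed
  then have "\<beta> * Rf \<le> \<beta> * R_star n m d \<theta>" using bge by (rule mult_left_mono)
  then show ?thesis using first unfolding Rf_def by simp
qed

end
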